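(* Let $\gamma_1,\gamma_2,\gamma_3\in\mathbb{R}$ with $\gamma_3<0$ and $\gamma_1\ge 2|\gamma_3|$, $\gamma_2\ge 2|\gamma_3|$, and let $\mathcal{L}(X)=\frac12\sum_{k=1}^3\gamma_k(\sigma_kX\sigma_k-X)$ on $\mathcal{M}_2$. Then $e^{t\mathcal{L}}$ is a unital Schwarz map for every $t\ge 0$.
   Context: $\sigma_1,\sigma_2,\sigma_3$ are the Pauli matrices. A unital Schwarz map on $\mathcal{M}_n$ is a linear map $\Phi$ with $\Phi(\mathbb{1})=\mathbb{1}$ and $\Phi(X^\dagger X)\ge\Phi(X)^\dagger\Phi(X)$ for all $X\in\mathcal{M}_n$. The generator $\mathcal{L}$ is self-dual with respect to the Hilbert–Schmidt inner product. *)

theory Defs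
  imports "HOL-Analysis.Analysis"
begin

type_synonym cmat2 = "complex^2^2"

definition cmat :: "complex \<Rightarrow> complex \<Rightarrow> complex \<Rightarrow> complex \<Rightarrow> cmat2" where
  "cmat a b c d = vector [vector [a, b], vector [c, d]]"

definition sigma1 :: cmat2 where "sigma1 = cmat 0 1 1 0"
definition sigma2 :: cmat2 where "sigma2 = cmat 0 (- \<i>) \<i> 0"
definition sigma3 :: cmat2 where "sigma3 = cmat 1 0 0 (-1)"

definition sigma :: "nat \<Rightarrow> cmat2" where
  "sigma k = (if k = 1 then sigma1 else if k = 2 then sigma2 else sigma3)"

definition adj :: "cmat2 \<Rightarrow> cmat2" where
  "adj A = (\<chi> i j. cnj (A $ j $ i))"

definition cscale :: "complex \<Rightarrow> cmat2 \<Rightarrow> cmat2" where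
  "cscale c A = (\<chi> i j. c * A $ i $ j)"

definition psd :: "cmat2 \<Rightarrow> bool" where
  "psd A \<longleftrightarrow> (\<forall>v::complex^2. let q = (\<Sum>i\<in>UNIV. cnj (v $ i) * (A *v v) $ i)
                         in Im q = 0 \<and> Re q \<ge> 0)"

definition unital_schwarz :: "(cmat2 \<Rightarrow> cmat2) \<Rightarrow> bool" where
  "unital_schwarz \<Phi> \<longleftrightarrow>
     (\<forall>X Y. \<Phi> (X + Y) = \<Phi> X + \<Phi> Y) \<and>
     (\<forall>c X. \<Phi> (cscale c X) = cscale c (\<Phi> X)) \<and>
     \<Phi> (mat 1) = mat 1 \<and>
     (\<forall>X. psd (\<Phi> (adj X ** X) - adj (\<Phi> X) ** \<Phi> X))"

definition gen :: "(nat \<Rightarrow> real) \<Rightarrow> cmat2 \<Rightarrow> cmat2" where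
  "gen \<gamma> X = (\<Sum>k\<in>{1..3}. cscale (complex_of_real (\<gamma> k / 2)) (sigma k ** X ** sigma k - X))"

definition expmap :: "real \<Rightarrow> (cmat2 \<Rightarrow> cmat2) \<Rightarrow> cmat2 \<Rightarrow> cmat2" where
  "expmap t L X = (\<Sum>n. (t ^ n / fact n) *\<^sub>R (L ^^ n) X)"

end

theory Submission
  imports Defs
begin


lemma cmat_nth [simp]:
  "cmat a b c d $ 1 $ 1 = a" "cmat a b c d $ 1 $ 2 = b"
  "cmat a b c d $ 2 $ 1 = c" "cmat a b c d $ 2 $ 2 = d"
  by (simp_all add: cmat_def)

lemma cmat_eq_iff: "M = N \<longleftrightarrow> M$1$1 = N$1$1 \<and> M$1$2 = N$1$2 \<and> M$2$1 = N$2$1 \<and> M$2$2 = N$2$2"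
  for M N :: cmat2
  by (auto simp: vec_eq_iff forall_2)

lemma cmat_expand: "X = cmat (X$1$1) (X$1$2) (X$2$1) (X$2$2)"
  by (simp add: cmat_eq_iff)

lemma cmat_add [simp]: "cmat a b c d + cmat a' b' c' d' = cmat (a+a') (b+b') (c+c') (d+d')"
  by (simp add: cmat_eq_iff)
lemma cmat_diff [simp]: "cmat a b c d - cmat a' b' c' d' = cmat (a-a') (b-b') (c-c') (d-d')"
  by (simp add: cmat_eq_iff)
lemma cmat_scaleR [simp]: "r *\<^sub>R cmat a b c d = cmat (of_real r*a) (of_real r*b) (of_real r*c) (of_real r*d)"
  by (simp add: cmat_eq_iff, simp add: scaleR_conv_of_real)
lemma cmat_zero: "0 = cmat 0 0 0 0"
  by (simp add: cmat_eq_iff)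
lemma cmat_mult [simp]: "cmat a b c d ** cmat a' b' c' d' = cmat (a*a'+b*c') (a*b'+b*d') (c*a'+d*c') (c*b'+d*d')"
  by (simp add: cmat_eq_iff matrix_matrix_mult_def sum_2)
lemma cmat_adj [simp]: "adj (cmat a b c d) = cmat (cnj a) (cnj c) (cnj b) (cnj d)"
  by (simp add: cmat_eq_iff adj_def)
lemma cmat_cscale [simp]: "cscale k (cmat a b c d) = cmat (k*a) (k*b) (k*c) (k*d)"
  by (simp add: cmat_eq_iff cscale_def)
lemma cmat_one: "mat 1 = cmat 1 0 0 1"
  by (simp add: cmat_eq_iff mat_def)

definition E :: "real \<Rightarrow> real \<Rightarrow> real \<Rightarrow> real \<Rightarrow> cmat2 \<Rightarrow> cmat2" where
  "E f0 f1 f2 f3 X = cmat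
     (of_real f0*(X$1$1+X$2$2)/2 + of_real f3*(X$1$1-X$2$2)/2)
     (of_real ((f1+f2)/2)*X$1$2 + of_real ((f1-f2)/2)*X$2$1)
     (of_real ((f1-f2)/2)*X$1$2 + of_real ((f1+f2)/2)*X$2$1)
     (of_real f0*(X$1$1+X$2$2)/2 - of_real f3*(X$1$1-X$2$2)/2)"

lemma ii_mult: "\<i> * x * \<i> = - (x::complex)"
  by (metis complex_i_mult_minus mult.commute mult.left_commute)

lemma sigma_conj:
  "sigma 1 ** cmat a b c d ** sigma 1 = cmat d c b a"
  "sigma 2 ** cmat a b c d ** sigma 2 = cmat d (-c) (-b) a"
  "sigma 3 ** cmat a b c d ** sigma 3 = cmat a (-b) (-c) d"
  by (simp_all add: sigma_def sigma1_def sigma2_def sigma3_def ii_mult)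

lemma sum3: "(\<Sum>k\<in>{1..3::nat}. f k) = f 1 + f 2 + f 3"
proof -
  have "{1..3::nat} = {1,2,3}" by auto
  then show ?thesis by (simp add: add.assoc)
qed

lemma gen_cmat: "gen \<gamma> (cmat a b c d) = cmat
     (of_real (-(\<gamma> 1+\<gamma> 2))*(a-d)/2)
     (of_real ((-(\<gamma> 2+\<gamma> 3) + -(\<gamma> 1+\<gamma> 3))/2)*b + of_real ((-(\<gamma> 2+\<gamma> 3) - -(\<gamma> 1+\<gamma> 3))/2)*c)
     (of_real ((-(\<gamma> 2+\<gamma> 3) - -(\<gamma> 1+\<gamma> 3))/2)*b + of_real ((-(\<gamma> 2+\<gamma> 3) + -(\<gamma> 1+\<gamma> 3))/2)*c)
     (- (of_real (-(\<gamma> 1+\<gamma> 2))*(a-d)/2))"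
  unfolding gen_def
  apply (simp only: sum3 sigma_conj)
  apply (simp add: cmat_eq_iff field_simps)
  done

lemma gen_pow: "(gen \<gamma> ^^ n) X = E (0^n) ((-(\<gamma> 2+\<gamma> 3))^n) ((-(\<gamma> 1+\<gamma> 3))^n) ((-(\<gamma> 1+\<gamma> 2))^n) X"
proof (induction n)
  case 0
  show ?case by (simp add: E_def cmat_eq_iff field_simps)
next
  case (Suc n)
  show ?case
    apply (simp only: funpow.simps comp_def Suc)
    apply (simp add: E_def gen_cmat cmat_eq_iff field_simps)
    done
qed

lemma E_lin: "E f0 f1 f2 f3 X = f0 *\<^sub>R E 1 0 0 0 X + f1 *\<^sub>R E 0 1 0 0 X + f2 *\<^sub>R E 0 0 1 0 X + f3 *\<^sub>R E 0 0 0 1 X"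
  by (simp add: E_def cmat_eq_iff field_simps)

lemma expmap_gen: "expmap t (gen \<gamma>) X = E 1 (exp (t*(-(\<gamma> 2+\<gamma> 3)))) (exp (t*(-(\<gamma> 1+\<gamma> 3)))) (exp (t*(-(\<gamma> 1+\<gamma> 2)))) X"
proof -
  define r1 where "r1 = -(\<gamma> 2+\<gamma> 3)"
  define r2 where "r2 = -(\<gamma> 1+\<gamma> 3)"
  define r3 where "r3 = -(\<gamma> 1+\<gamma> 2)"
  define M0 where "M0 = E 1 0 0 0 X"
  define M1 where "M1 = E 0 1 0 0 X"
  define M2 where "M2 = E 0 0 1 0 X"
  define M3 where "M3 = E 0 0 0 1 X"
  have tm: "(t ^ n / fact n) *\<^sub>R (gen \<gamma> ^^ n) X =
     ((t*0)^n /\<^sub>R fact n) *\<^sub>R M0 + ((t*r1)^n /\<^sub>R fact n) *\<^sub>R M1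
     + ((t*r2)^n /\<^sub>R fact n) *\<^sub>R M2 + ((t*r3)^n /\<^sub>R fact n) *\<^sub>R M3" for n
    unfolding gen_pow r1_def[symmetric] r2_def[symmetric] r3_def[symmetric] M0_def M1_def M2_def M3_def
    by (cases "n = 0"; subst E_lin; simp add: scaleR_add_right power_mult_distrib field_simps)
  have "(\<lambda>n. (t ^ n / fact n) *\<^sub>R (gen \<gamma> ^^ n) X) sums
     (exp (t*0) *\<^sub>R M0 + exp (t*r1) *\<^sub>R M1 + exp (t*r2) *\<^sub>R M2 + exp (t*r3) *\<^sub>R M3)"
    unfolding tm
    by (intro sums_add sums_scaleR_left exp_converges)
  then have "expmap t (gen \<gamma>) X = exp (t*0) *\<^sub>R M0 + exp (t*r1) *\<^sub>R M1 + exp (t*r2) *\<^sub>R M2 + exp (t*r3) *\<^sub>R M3"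
    unfolding expmap_def by (rule sums_unique[symmetric])
  also have "\<dots> = E 1 (exp (t*r1)) (exp (t*r2)) (exp (t*r3)) X"
    unfolding M0_def M1_def M2_def M3_def by (subst (5) E_lin) simp
  finally show ?thesis unfolding r1_def r2_def r3_def .
qed

lemma two_ab_le:
  fixes P R m a b :: real
  assumes "P \<ge> 0" "R \<ge> 0" "m \<ge> 0" "a \<ge> 0" "b \<ge> 0" "m^2 \<le> P * R"
  shows "2 * (a * m * b) \<le> P * a^2 + R * b^2"
proof -
  have "(2 * (a * m * b))^2 = 4 * a^2 * b^2 * m^2" by (simp add: power_mult_distrib)
  also have "\<dots> \<le> 4 * a^2 * b^2 * (P * R)"
    using assms by (intro mult_left_mono) auto
  also have "\<dots> \<le> (P * a^2 + R * b^2)^2"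
  proof -
    have "0 \<le> (P * a^2 - R * b^2)^2" by simp
    then show ?thesis by (simp add: power2_eq_square algebra_simps)
  qed
  finally have "(2 * (a * m * b))^2 \<le> (P * a^2 + R * b^2)^2" .
  moreover have "0 \<le> P * a^2 + R * b^2" using assms by simp
  ultimately show ?thesis by (rule power2_le_imp_le)
qed

lemma psd_cmat:
  assumes "Im p = 0" "Im r = 0" "Re p + Re r \<ge> 0" "Re p * Re r \<ge> (cmod q)^2"
  shows "psd (cmat p q (cnj q) r)"
  unfolding psd_def Let_def
proof
  fix v :: "complex^2"
  define v1 v2 where "v1 = v$1" and "v2 = v$2"
  define P R where "P = Re p" and "R = Re r"
  have pP: "p = of_real P" using assms(1) unfolding P_def by (simp add: complex_eq_iff)
  have rR: "r = of_real R" using assms(2) unfolding R_def by (simp add: complex_eq_iff)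
  have PR: "P \<ge> 0" "R \<ge> 0"
  proof -
    have "P * R \<ge> 0" using assms(4) unfolding P_def R_def by (meson order_trans zero_le_power2)
    then show "P \<ge> 0" "R \<ge> 0" using assms(3) unfolding P_def R_def
      by (smt (verit) mult_nonneg_nonneg mult_nonpos_nonpos zero_le_mult_iff)+
  qed
  define w where "w = cnj v1 * q * v2"
  have "(\<Sum>i\<in>UNIV. cnj (v $ i) * (cmat p q (cnj q) r *v v) $ i)
     = cnj v1 * (p * v1 + q * v2) + cnj v2 * (cnj q * v1 + r * v2)"
    by (simp add: sum_2 matrix_vector_mult_def v1_def v2_def)
  also have "\<dots> = p * (v1 * cnj v1) + r * (v2 * cnj v2) + (w + cnj w)"
    unfolding w_def by (simp add: algebra_simps)
  also have "\<dots> = of_real (P * (cmod v1)^2 + R * (cmod v2)^2 + 2 * Re w)"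
    unfolding pP rR complex_norm_square[symmetric] complex_add_cnj by simp
  finally have Q: "(\<Sum>i\<in>UNIV. cnj (v $ i) * (cmat p q (cnj q) r *v v) $ i)
      = of_real (P * (cmod v1)^2 + R * (cmod v2)^2 + 2 * Re w)" .
  have "\<bar>Re w\<bar> \<le> cmod v1 * cmod q * cmod v2"
    using abs_Re_le_cmod[of w] unfolding w_def by (simp add: norm_mult)
  moreover have "2 * (cmod v1 * cmod q * cmod v2) \<le> P * (cmod v1)^2 + R * (cmod v2)^2"
    using PR assms(4) unfolding P_def[symmetric] R_def[symmetric]
    by (intro two_ab_le) auto
  ultimately have "0 \<le> P * (cmod v1)^2 + R * (cmod v2)^2 + 2 * Re w" by linarith
  then show "Im (\<Sum>i\<in>UNIV. cnj (v $ i) * (cmat p q (cnj q) r *v v) $ i) = 0 \<and>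
      0 \<le> Re (\<Sum>i\<in>UNIV. cnj (v $ i) * (cmat p q (cnj q) r *v v) $ i)"
    unfolding Q by simp
qed



lemma AC_le:
  fixes A C :: real
  assumes "A \<ge> 0" "C \<ge> 1" "A*C^2 \<le> 1"
  shows "A*C \<le> 1"
proof -
  have "A*C*1 \<le> A*C*C" using assms by (intro mult_left_mono) auto
  then show ?thesis using assms(3) by (simp add: power2_eq_square mult.assoc)
qed

lemma ineqB:
  fixes A B C :: real
  assumes "A \<ge> 0" "B \<ge> 0" "C \<ge> 1" "A*C^2 \<le> 1" "B*C^2 \<le> 1"
  shows "A*B*(1-C)^2 \<le> (1-B*C)*(1-A*C)"
proof -
  have c2: "2*C - 1 \<le> C^2"
  proof -
    have "0 \<le> (C-1)^2" by simp
    then show ?thesis by (simp add: power2_eq_square algebra_simps)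
  qed
  have hA: "A*(C-1) \<le> 1 - A*C"
  proof -
    have "A*(2*C-1) \<le> A*C^2" by (rule mult_left_mono[OF c2 assms(1)])
    then show ?thesis using assms(4) by (simp add: algebra_simps)
  qed
  have hB: "B*(C-1) \<le> 1 - B*C"
  proof -
    have "B*(2*C-1) \<le> B*C^2" by (rule mult_left_mono[OF c2 assms(2)])
    then show ?thesis using assms(5) by (simp add: algebra_simps)
  qed
  have "(A*(C-1))*(B*(C-1)) \<le> (1-A*C)*(1-B*C)"
    using assms AC_le[of A C] by (intro mult_mono hA hB) auto
  then show ?thesis by (simp add: power2_eq_square algebra_simps)
qed

lemma ineqA:
  fixes A B C :: real
  assumes "A \<ge> 0" "B \<ge> 0" "C \<ge> 1" "A*C^2 \<le> 1" "B*C^2 \<le> 1"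
  shows "B*C*(1-A)^2 \<le> (1-A*C)*(1-A*B)"
proof -
  define K where "K = A*(1-A*C) + C*(1-A)^2"
  have AC: "A*C \<le> 1"
  proof -
    have "A*C \<le> A*C^2" using assms by (simp add: power2_eq_square mult_left_mono)
    then show ?thesis using assms(4) by linarith
  qed
  have K0: "K \<ge> 0" unfolding K_def using assms AC by simp
  have h: "(1-A*C)*(1-A*B) - B*C*(1-A)^2 = (1-A*C) - B*K"
    unfolding K_def by (simp add: power2_eq_square algebra_simps)
  have s2: "C^2*(B*K) \<le> K"
  proof -
    have "(B*C^2)*K \<le> 1*K" using K0 assms(5) by (intro mult_right_mono) auto
    then show ?thesis by (simp add: algebra_simps)
  qed
  have cub: "C^3 - 2*C + 1 \<ge> 0"
  proof -
    have "C^3 - 2*C + 1 = (C-1)*(C^2+C-1)" by (simp add: power2_eq_square power3_eq_cube algebra_simps)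
    moreover have "C^2 + C - 1 \<ge> 0" using assms(3) by (smt (verit) one_le_power)
    ultimately show ?thesis using assms(3) by simp
  qed
  have gA: "C^2*(1-A*C) - K = C^2 - C - A*(C^3-2*C+1)"
    unfolding K_def by (simp add: power2_eq_square power3_eq_cube algebra_simps)
  have "0 \<le> (C-1)^3*(C+1)" using assms(3) by simp
  also have "(C-1)^3*(C+1) = C^4 - C^3 - 1*(C^3-2*C+1)"
    by (simp add: power2_eq_square power3_eq_cube algebra_simps eval_nat_numeral)
  also have "\<dots> \<le> C^4 - C^3 - (A*C^2)*(C^3-2*C+1)"
  proof -
    have "(A*C^2)*(C^3-2*C+1) \<le> 1*(C^3-2*C+1)" by (rule mult_right_mono[OF assms(4) cub])
    then show ?thesis by linarith
  qed
  also have "\<dots> = C^2*(C^2 - C - A*(C^3-2*C+1))"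
    by (simp add: power2_eq_square power3_eq_cube algebra_simps eval_nat_numeral)
  finally have "C^2*(C^2 - C - A*(C^3-2*C+1)) \<ge> 0" .
  then have g0: "C^2 - C - A*(C^3-2*C+1) \<ge> 0"
    using assms(3) by (simp add: zero_le_mult_iff)
  have "C^2*((1-A*C) - B*K) \<ge> 0"
    using g0 gA s2 by (simp add: algebra_simps)
  then have "(1-A*C) - B*K \<ge> 0" using assms(3) by (simp add: zero_le_mult_iff)
  then show ?thesis using h by simp
qed



lemma schwarz_core:
  fixes yq yw ye yr zq zw ze zr lw le lr :: real
  defines "X \<equiv> cmat (Complex (yq+yr) (zq+zr)) (Complex (yw+ze) (zw-ye)) (Complex (yw-ze) (zw+ye)) (Complex (yq-yr) (zq-zr))"
  defines "D \<equiv> E 1 lw le lr (adj X ** X) - adj (E 1 lw le lr X) ** E 1 lw le lr X"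
  shows "Im (D$1$1) = 0" "Im (D$2$2) = 0" "D$2$1 = cnj (D$1$2)"
    "Re (D$1$1) + Re (D$2$2) = 2 * ((1-lw^2)*(yw^2+zw^2) + (1-le^2)*(ye^2+ze^2) + (1-lr^2)*(yr^2+zr^2))"
  unfolding D_def X_def
  by (simp_all add: E_def complex_eq_iff field_simps power2_eq_square)

lemma schwarz_det:
  fixes yq yw ye yr zq zw ze zr lw le lr :: real
  defines "X \<equiv> cmat (Complex (yq+yr) (zq+zr)) (Complex (yw+ze) (zw-ye)) (Complex (yw-ze) (zw+ye)) (Complex (yq-yr) (zq-zr))"
  defines "D \<equiv> E 1 lw le lr (adj X ** X) - adj (E 1 lw le lr X) ** E 1 lw le lr X"
  defines "A1 \<equiv> 1 - lw^2" and "A2 \<equiv> 1 - le^2" and "A3 \<equiv> 1 - lr^2"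
  defines "C1 \<equiv> lw - le*lr" and "C2 \<equiv> le - lw*lr" and "C3 \<equiv> lr - lw*le"
  defines "P \<equiv> A1*yw^2 + A2*ye^2 + A3*yr^2" and "Q \<equiv> A1*zw^2 + A2*ze^2 + A3*zr^2"
    and "R \<equiv> A1*yw*zw + A2*ye*ze + A3*yr*zr"
  defines "w1 \<equiv> ye*zr - yr*ze" and "w2 \<equiv> yr*zw - yw*zr" and "w3 \<equiv> yw*ze - ye*zw"
  shows "Re (D$1$1) * Re (D$2$2) - (cmod (D$1$2))^2 =
    (P - Q)^2 + 4*R^2 + 4*((A2*A3 - C1^2)*w1^2 + (A1*A3 - C2^2)*w2^2 + (A1*A2 - C3^2)*w3^2)"
  unfolding D_def X_def cmod_power2 P_def Q_def R_def w1_def w2_def w3_def A1_def A2_def A3_def C1_def C2_def C3_def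
  by (simp add: E_def field_simps power2_eq_square)


lemma schwarz_E:
  fixes l1 l2 l3 :: real
  assumes A: "l1^2 \<le> 1" "l2^2 \<le> 1" "l3^2 \<le> 1"
    and C: "(l1 - l2*l3)^2 \<le> (1-l2^2)*(1-l3^2)" "(l2 - l1*l3)^2 \<le> (1-l1^2)*(1-l3^2)"
      "(l3 - l1*l2)^2 \<le> (1-l1^2)*(1-l2^2)"
  shows "psd (E 1 l1 l2 l3 (adj X ** X) - adj (E 1 l1 l2 l3 X) ** E 1 l1 l2 l3 X)"
proof -
  define y0 where "y0 = Re (X$1$1 + X$2$2)/2"
  define z0 where "z0 = Im (X$1$1 + X$2$2)/2"
  define y3 where "y3 = Re (X$1$1 - X$2$2)/2"
  define z3 where "z3 = Im (X$1$1 - X$2$2)/2"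
  define y1 where "y1 = Re (X$1$2 + X$2$1)/2"
  define z1 where "z1 = Im (X$1$2 + X$2$1)/2"
  define z2 where "z2 = Re (X$1$2 - X$2$1)/2"
  define y2 where "y2 = Im (X$2$1 - X$1$2)/2"
  have Xe: "X = cmat (Complex (y0+y3) (z0+z3)) (Complex (y1+z2) (z1-y2)) (Complex (y1-z2) (z1+y2)) (Complex (y0-y3) (z0-z3))"
    unfolding y0_def z0_def y3_def z3_def y1_def z1_def y2_def z2_def
    by (simp add: cmat_eq_iff complex_eq_iff field_simps)
  define D where "D = E 1 l1 l2 l3 (adj X ** X) - adj (E 1 l1 l2 l3 X) ** E 1 l1 l2 l3 X"
  note core = schwarz_core[where yq=y0 and yw=y1 and ye=y2 and yr=y3 and zq=z0 and zw=z1 and ze=z2 and zr=z3 and lw=l1 and le=l2 and lr=l3, folded Xe, folded D_def]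
  note det = schwarz_det[where yq=y0 and yw=y1 and ye=y2 and yr=y3 and zq=z0 and zw=z1 and ze=z2 and zr=z3 and lw=l1 and le=l2 and lr=l3, folded Xe, folded D_def]
  have DE: "D = cmat (D$1$1) (D$1$2) (cnj (D$1$2)) (D$2$2)"
    using core(3) by (simp add: cmat_eq_iff)
  have "psd (cmat (D$1$1) (D$1$2) (cnj (D$1$2)) (D$2$2))"
  proof (rule psd_cmat)
    show "Im (D$1$1) = 0" "Im (D$2$2) = 0" by (rule core(1), rule core(2))
    show "0 \<le> Re (D$1$1) + Re (D$2$2)"
      unfolding core(4) using A by (intro mult_nonneg_nonneg add_nonneg_nonneg) auto
    show "(cmod (D$1$2))^2 \<le> Re (D$1$1) * Re (D$2$2)"
    proof -
      have "0 \<le> Re (D$1$1) * Re (D$2$2) - (cmod (D$1$2))^2"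
        unfolding det using C
        by (intro add_nonneg_nonneg mult_nonneg_nonneg) (auto simp: algebra_simps)
      then show ?thesis by simp
    qed
  qed
  then show ?thesis using DE D_def by simp
qed

lemma unital_E:
  fixes l1 l2 l3 :: real
  assumes A: "l1^2 \<le> 1" "l2^2 \<le> 1" "l3^2 \<le> 1"
    and C: "(l1 - l2*l3)^2 \<le> (1-l2^2)*(1-l3^2)" "(l2 - l1*l3)^2 \<le> (1-l1^2)*(1-l3^2)"
      "(l3 - l1*l2)^2 \<le> (1-l1^2)*(1-l2^2)"
  shows "unital_schwarz (E 1 l1 l2 l3)"
  unfolding unital_schwarz_def
proof (intro conjI allI)
  show "E 1 l1 l2 l3 (X + Y) = E 1 l1 l2 l3 X + E 1 l1 l2 l3 Y" for X Y
    by (simp add: E_def cmat_eq_iff field_simps)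
  show "E 1 l1 l2 l3 (cscale c X) = cscale c (E 1 l1 l2 l3 X)" for c X
    by (simp add: E_def cmat_eq_iff cscale_def field_simps)
  show "E 1 l1 l2 l3 (mat 1) = mat 1"
    by (simp add: E_def cmat_eq_iff mat_def)
  show "psd (E 1 l1 l2 l3 (adj X ** X) - adj (E 1 l1 l2 l3 X) ** E 1 l1 l2 l3 X)" for X
    by (rule schwarz_E[OF A C])
qed

theorem mainTheorem4:
  fixes \<gamma> :: "nat \<Rightarrow> real"
  assumes "\<gamma> 3 < 0"
    and "\<gamma> 1 \<ge> 2 * \<bar>\<gamma> 3\<bar>"
    and "\<gamma> 2 \<ge> 2 * \<bar>\<gamma> 3\<bar>"
  shows "\<forall>t::real. t \<ge> 0 \<longrightarrow> unital_schwarz (expmap t (gen \<gamma>))"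
proof (intro allI impI)
  fix t :: real
  assume t: "t \<ge> 0"
  define e1 where "e1 = exp (-(t*\<gamma> 1))"
  define e2 where "e2 = exp (-(t*\<gamma> 2))"
  define e3 where "e3 = exp (-(t*\<gamma> 3))"
  have l1: "exp (t*(-(\<gamma> 2+\<gamma> 3))) = e2*e3" unfolding e2_def e3_def
    by (simp add: exp_add[symmetric] algebra_simps)
  have l2: "exp (t*(-(\<gamma> 1+\<gamma> 3))) = e1*e3" unfolding e1_def e3_def
    by (simp add: exp_add[symmetric] algebra_simps)
  have l3: "exp (t*(-(\<gamma> 1+\<gamma> 2))) = e1*e2" unfolding e1_def e2_def
    by (simp add: exp_add[symmetric] algebra_simps)
  have fun_eq: "expmap t (gen \<gamma>) = E 1 (e2*e3) (e1*e3) (e1*e2)"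
    by (rule ext, simp only: expmap_gen l1 l2 l3)
  define A where "A = e1^2"
  define B where "B = e2^2"
  define C where "C = e3^2"
  have A0: "A \<ge> 0" and B0: "B \<ge> 0" unfolding A_def B_def by simp_all
  have C1: "C \<ge> 1"
  proof -
    have "e3 \<ge> 1" unfolding e3_def using t assms(1) by (simp add: mult_nonneg_nonpos)
    then show ?thesis unfolding C_def by (simp add: one_le_power)
  qed
  have AC: "A*C^2 \<le> 1"
  proof -
    have "e1*e3*e3 = exp (-(t*\<gamma> 1) + -(t*\<gamma> 3) + -(t*\<gamma> 3))"
      unfolding e1_def e3_def exp_add by simp
    also have "\<dots> \<le> 1"
    proof -
      have "t*(\<gamma> 1 + 2*\<gamma> 3) \<ge> 0" using t assms(1,2) by (intro mult_nonneg_nonneg) auto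
      then show ?thesis by (simp add: algebra_simps)
    qed
    finally have "e1*e3*e3 \<le> 1" .
    moreover have "e1*e3*e3 \<ge> 0" unfolding e1_def e3_def by simp
    ultimately have "(e1*e3*e3)^2 \<le> 1" by (simp add: power_le_one)
    then show ?thesis unfolding A_def C_def by (simp add: power2_eq_square algebra_simps)
  qed
  have BC: "B*C^2 \<le> 1"
  proof -
    have "e2*e3*e3 = exp (-(t*\<gamma> 2) + -(t*\<gamma> 3) + -(t*\<gamma> 3))"
      unfolding e2_def e3_def exp_add by simp
    also have "\<dots> \<le> 1"
    proof -
      have "t*(\<gamma> 2 + 2*\<gamma> 3) \<ge> 0" using t assms(1,3) by (intro mult_nonneg_nonneg) auto
      then show ?thesis by (simp add: algebra_simps)
    qed
    finally have "e2*e3*e3 \<le> 1" .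
    moreover have "e2*e3*e3 \<ge> 0" unfolding e2_def e3_def by simp
    ultimately have "(e2*e3*e3)^2 \<le> 1" by (simp add: power_le_one)
    then show ?thesis unfolding B_def C_def by (simp add: power2_eq_square algebra_simps)
  qed
  have AC1: "A*C \<le> 1" by (rule AC_le[OF A0 C1 AC])
  have BC1: "B*C \<le> 1" by (rule AC_le[OF B0 C1 BC])
  have AB1: "A*B \<le> 1"
  proof -
    have "A*1 \<le> A*C" by (rule mult_left_mono[OF C1 A0])
    then have "A \<le> 1" using AC1 by simp
    moreover have "B*1 \<le> B*C" by (rule mult_left_mono[OF C1 B0])
    then have "B \<le> 1" using BC1 by simp
    ultimately show ?thesis using A0 B0 by (simp add: mult_le_one)
  qed
  have sq: "(e2*e3)^2 = B*C" "(e1*e3)^2 = A*C" "(e1*e2)^2 = A*B"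
    unfolding A_def B_def C_def by (simp_all add: power_mult_distrib)
  have c1: "(e2*e3 - e1*e3*(e1*e2))^2 = B*C*(1-A)^2"
    unfolding A_def B_def C_def by (simp add: power2_eq_square algebra_simps)
  have c2: "(e1*e3 - e2*e3*(e1*e2))^2 = A*C*(1-B)^2"
    unfolding A_def B_def C_def by (simp add: power2_eq_square algebra_simps)
  have c3: "(e1*e2 - e2*e3*(e1*e3))^2 = A*B*(1-C)^2"
    unfolding A_def B_def C_def by (simp add: power2_eq_square algebra_simps)
  show "unital_schwarz (expmap t (gen \<gamma>))"
    unfolding fun_eq
  proof (rule unital_E)
    show "(e2*e3)^2 \<le> 1" "(e1*e3)^2 \<le> 1" "(e1*e2)^2 \<le> 1"
      unfolding sq using AC1 BC1 AB1 by simp_all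
    show "(e2*e3 - e1*e3*(e1*e2))^2 \<le> (1-(e1*e3)^2)*(1-(e1*e2)^2)"
      unfolding c1 sq by (rule ineqA[OF A0 B0 C1 AC BC])
    show "(e1*e3 - e2*e3*(e1*e2))^2 \<le> (1-(e2*e3)^2)*(1-(e1*e2)^2)"
      unfolding c2 sq using ineqA[OF B0 A0 C1 BC AC] by (simp add: mult.commute)
    show "(e1*e2 - e2*e3*(e1*e3))^2 \<le> (1-(e2*e3)^2)*(1-(e1*e3)^2)"
      unfolding c3 sq by (rule ineqB[OF A0 B0 C1 AC BC])
  qed
qed

end
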